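(* Let $F,G$ be graphs with $F\to G$. Then $\mathsf{HDE}(F,G)\le |V_F|/|V_G|$, $\mathsf{HDE}(F,G)\le \mathsf{CC}(F)/\mathsf{CC}(G)$, and, if $\alpha(G)\ge1$, $\mathsf{HDE}(F,G)\le \alpha(F)/\alpha(G)$.
   Context: Graphs are finite directed graphs $G=(V_G,E_G)$ with $V_G$ nonempty finite and $E_G\subseteq V_G\times V_G$ (loops allowed). Homomorphisms are vertex maps sending edges to edges; $\hom(F,G)$ is their number and $F\to G$ means $\hom(F,G)\ge1$. $\mathsf{HDE}(F,G)=\sup\{c\in\mathbb R:\hom(F,T)\ge\hom(G,T)^c\text{ for all graphs }T\}$. $\mathsf{CC}(H)$ is the number of connected components of $H$ ignoring edge directions. $\alpha(H)$ is the maximum size of a set $I\subseteq V_H$ such that $E_H\cap (I\times I)=\emptyset$ (no edges, including loops, within $I$). *)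

theory Defs
  imports Complex_Main "HOL-Library.FuncSet"
begin

type_synonym 'a graph = "'a set \<times> ('a \<times> 'a) set"

definition verts :: "'a graph \<Rightarrow> 'a set" where "verts G = fst G"
definition edges :: "'a graph \<Rightarrow> ('a \<times> 'a) set" where "edges G = snd G"

definition is_graph :: "'a graph \<Rightarrow> bool" where
  "is_graph G \<longleftrightarrow> verts G \<noteq> {} \<and> finite (verts G) \<and> edges G \<subseteq> verts G \<times> verts G"

definition homs :: "'a graph \<Rightarrow> 'b graph \<Rightarrow> ('a \<Rightarrow> 'b) set" where
  "homs F T = {f \<in> verts F \<rightarrow>\<^sub>E verts T. \<forall>(u,v) \<in> edges F. (f u, f v) \<in> edges T}"

definition hom_count :: "'a graph \<Rightarrow> 'b graph \<Rightarrow> nat" where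
  "hom_count F T = card (homs F T)"

definition hom_exists :: "'a graph \<Rightarrow> 'b graph \<Rightarrow> bool" where
  "hom_exists F G \<longleftrightarrow> hom_count F G \<ge> 1"

text \<open>Homomorphism domination exponent; test graphs T range over graphs on nat
  (every finite graph is isomorphic to one, and hom counts are isomorphism invariant).\<close>
definition HDE :: "'a graph \<Rightarrow> 'b graph \<Rightarrow> real" where
  "HDE F G = Sup {c::real. \<forall>T :: nat graph. is_graph T \<longrightarrow>
      real (hom_count F T) \<ge> real (hom_count G T) powr c}"

definition CC :: "'a graph \<Rightarrow> nat" where
  "CC G = card (verts G // ((edges G \<union> (edges G)\<inverse>)\<^sup>*))"

text \<open>Independence number (loops forbid a vertex from an independent set).\<close>
definition indep_num :: "'a graph \<Rightarrow> nat" where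
  "indep_num G = Max {card I | I. I \<subseteq> verts G \<and> edges G \<inter> (I \<times> I) = {}}"

end

theory Submission imports Defs begin

lemma homs_finite:
  assumes "is_graph F" "is_graph T" shows "finite (homs F T)"
proof -
  have "homs F T \<subseteq> verts F \<rightarrow>\<^sub>E verts T" unfolding homs_def by auto
  moreover have "finite (verts F \<rightarrow>\<^sub>E verts T)"
    using assms by (intro finite_PiE) (auto simp: is_graph_def)
  ultimately show ?thesis by (rule finite_subset)
qed

lemma HDE_le:
  fixes F :: "'a graph" and G :: "'b graph"
  assumes F: "is_graph F" and G: "is_graph G" and ex: "hom_exists F G"
    and bnd: "\<And>c. (\<forall>T::nat graph. is_graph T \<longrightarrow> real (hom_count G T) powr c \<le> real (hom_count F T)) \<Longrightarrow> c \<le> B"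
  shows "HDE F G \<le> B"
  unfolding HDE_def
proof (rule cSup_least)
  show "{c::real. \<forall>T :: nat graph. is_graph T \<longrightarrow>
      real (hom_count F T) \<ge> real (hom_count G T) powr c} \<noteq> {}"
  proof -
    have "0 \<in> {c::real. \<forall>T :: nat graph. is_graph T \<longrightarrow>
      real (hom_count F T) \<ge> real (hom_count G T) powr c}"
    proof (clarify)
      fix T :: "nat graph" assume T: "is_graph T"
      show "real (hom_count G T) powr 0 \<le> real (hom_count F T)"
      proof (cases "hom_count G T = 0")
        case True then show ?thesis by simp
      next
        case False
        then obtain g where g: "g \<in> homs G T" unfolding hom_count_def by fastforce
        from ex obtain h where h: "h \<in> homs F G" unfolding hom_exists_def hom_count_def
          by (metis card.empty ex_in_conv not_one_le_zero)
        let ?f = "restrict (g \<circ> h) (verts F)"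
        have "?f \<in> homs F T" using g h F unfolding homs_def is_graph_def
          by (auto simp: PiE_def Pi_def split: prod.splits)
        then have "hom_count F T \<ge> 1" unfolding hom_count_def
          using homs_finite[OF F T] by (metis One_nat_def Suc_leI card_gt_0_iff empty_iff)
        then show ?thesis using False by simp
      qed
    qed
    then show ?thesis by blast
  qed
next
  fix x assume "x \<in> {c::real. \<forall>T :: nat graph. is_graph T \<longrightarrow>
      real (hom_count F T) \<ge> real (hom_count G T) powr c}"
  then show "x \<le> B" using bnd by auto
qed

lemma family_bound:
  fixes F :: "'a graph" and G :: "'b graph" and T :: "nat \<Rightarrow> nat graph"
  assumes c: "\<forall>T::nat graph. is_graph T \<longrightarrow> real (hom_count G T) powr c \<le> real (hom_count F T)"
    and TG: "\<And>n. n \<ge> 1 \<Longrightarrow> is_graph (T n)"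
    and up: "\<And>n. n \<ge> 1 \<Longrightarrow> real (hom_count F (T n)) \<le> K * real n ^ a"
    and low: "\<And>n. n \<ge> 1 \<Longrightarrow> real n ^ b \<le> real (hom_count G (T n))"
    and b: "b > 0"
  shows "c \<le> real a / real b"
proof (rule ccontr)
  assume "\<not> c \<le> real a / real b"
  then have cgt: "c > real a / real b" by simp
  have "real a / real b \<ge> 0" by simp
  with cgt have c0: "c > 0" by linarith
  define d where "d = real b * c - real a"
  have d0: "d > 0" using cgt b unfolding d_def by (simp add: field_simps)
  have key: "2 powr (real k * d) \<le> K" for k :: nat
  proof -
    let ?n = "(2::nat)^k"
    have n1: "?n \<ge> 1" by simp
    have "(real ?n ^ b) powr c \<le> real (hom_count G (T ?n)) powr c"
      using low[OF n1] c0 by (intro powr_mono2) auto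
    also have "\<dots> \<le> real (hom_count F (T ?n))" using c TG[OF n1] by blast
    also have "\<dots> \<le> K * real ?n ^ a" using up[OF n1] .
    finally have *: "(real ?n ^ b) powr c \<le> K * real ?n ^ a" .
    have e1: "(real ?n ^ b) powr c = 2 powr (real k * real b * c)"
      by (simp add: powr_realpow[symmetric] powr_powr power_mult[symmetric] mult.commute)
    have e2: "real ?n ^ a = 2 powr (real k * real a)"
      by (simp add: powr_realpow[symmetric] powr_powr power_mult[symmetric] mult.commute)
    have "2 powr (real k * real b * c) \<le> K * 2 powr (real k * real a)" using * e1 e2 by simp
    then have "2 powr (real k * real b * c) / 2 powr (real k * real a) \<le> K"
      by (simp add: divide_le_eq)
    moreover have "2 powr (real k * real b * c) / 2 powr (real k * real a) = 2 powr (real k * d)"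
      unfolding d_def by (simp add: powr_diff[symmetric] algebra_simps)
    ultimately show ?thesis by simp
  qed
  have K0: "K > 0" using key[of 0] by simp
  obtain k :: nat where k: "ln K / (d * ln 2) < real k" using reals_Archimedean2 by blast
  have "ln (2 powr (real k * d)) \<le> ln K" using key[of k] K0 by (subst ln_le_cancel_iff) auto
  moreover have "ln (2 powr (real k * d)) = real k * d * ln 2" by (rule ln_powr)
  ultimately have "real k * d * ln 2 \<le> ln K" by simp
  then have "real k \<le> ln K / (d * ln 2)" using d0 by (simp add: field_simps)
  with k show False by simp
qed


definition Kn :: "nat \<Rightarrow> nat graph" where "Kn n = ({0..<n}, {0..<n} \<times> {0..<n})"

lemma Kn_graph: "n \<ge> 1 \<Longrightarrow> is_graph (Kn n)"
  by (auto simp: is_graph_def Kn_def verts_def edges_def)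

lemma Kn_count: assumes "is_graph F" shows "hom_count F (Kn n) = n ^ card (verts F)"
proof -
  have "homs F (Kn n) = verts F \<rightarrow>\<^sub>E {0..<n}"
    using assms unfolding homs_def Kn_def verts_def edges_def is_graph_def
    by (auto simp: PiE_def Pi_def)
  then show ?thesis unfolding hom_count_def using assms
    by (simp add: card_funcsetE is_graph_def)
qed

definition Ln :: "nat \<Rightarrow> nat graph" where "Ln n = ({0..<n}, Id_on {0..<n})"

lemma Ln_graph: "n \<ge> 1 \<Longrightarrow> is_graph (Ln n)"
  by (auto simp: is_graph_def Ln_def verts_def edges_def)

lemma Ln_const:
  assumes f: "f \<in> homs F (Ln n)" and xy: "(x,y) \<in> (edges F \<union> (edges F)\<inverse>)\<^sup>*"
  shows "f x = f y"
  using xy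
proof (induction rule: rtrancl_induct)
  case base then show ?case by simp
next
  case (step y z)
  from step.hyps(2) f have "f y = f z" unfolding homs_def Ln_def edges_def
    by (auto simp: Id_on_def)
  with step.IH show ?case by simp
qed

lemma quot_finite: "is_graph F \<Longrightarrow> finite (verts F // R)"
  unfolding quotient_def is_graph_def by auto

lemma Ln_upper:
  assumes F: "is_graph F"
  shows "hom_count F (Ln n) \<le> n ^ CC F"
proof -
  let ?R = "(edges F \<union> (edges F)\<inverse>)\<^sup>*"
  let ?Q = "verts F // ?R"
  define \<Phi> where "\<Phi> f = (\<lambda>C\<in>?Q. f (SOME x. x \<in> C))" for f :: "'a \<Rightarrow> nat"
  have inj: "inj_on \<Phi> (homs F (Ln n))"
  proof (rule inj_onI)
    fix f g assume f: "f \<in> homs F (Ln n)" and g: "g \<in> homs F (Ln n)" and e: "\<Phi> f = \<Phi> g"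
    show "f = g"
    proof
      fix v show "f v = g v"
      proof (cases "v \<in> verts F")
        case True
        let ?C = "?R `` {v}"
        have C: "?C \<in> ?Q" using True by (auto simp: quotient_def)
        have "v \<in> ?C" by simp
        then have s: "(SOME x. x \<in> ?C) \<in> ?C" by (rule someI)
        then have vs: "(v, SOME x. x \<in> ?C) \<in> ?R" by simp
        have "f (SOME x. x \<in> ?C) = g (SOME x. x \<in> ?C)"
          using fun_cong[OF e, of ?C] C unfolding \<Phi>_def by simp
        then show ?thesis using Ln_const[OF f vs] Ln_const[OF g vs] by simp
      next
        case False then show ?thesis using f g unfolding homs_def by (auto simp: PiE_def extensional_def)
      qed
    qed
  qed
  have img: "\<Phi> ` homs F (Ln n) \<subseteq> ?Q \<rightarrow>\<^sub>E {0..<n}"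
  proof
    fix h assume "h \<in> \<Phi> ` homs F (Ln n)"
    then obtain f where f: "f \<in> homs F (Ln n)" and h: "h = \<Phi> f" by blast
    show "h \<in> ?Q \<rightarrow>\<^sub>E {0..<n}" unfolding h \<Phi>_def
    proof (rule restrict_PiE_iff[THEN iffD2], intro ballI)
      fix C assume "C \<in> ?Q"
      then obtain v where v: "v \<in> verts F" "C = ?R `` {v}" by (auto simp: quotient_def)
      have "v \<in> C" using v by simp
      then have s: "(SOME x. x \<in> C) \<in> C" by (rule someI)
      then have vs: "(v, SOME x. x \<in> C) \<in> ?R" using v by simp
      have "f v \<in> {0..<n}" using f v unfolding homs_def Ln_def verts_def by auto
      then show "f (SOME x. x \<in> C) \<in> {0..<n}" using Ln_const[OF f vs] by simp
    qed
  qed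
  have "card (homs F (Ln n)) = card (\<Phi> ` homs F (Ln n))" using inj by (simp add: card_image)
  also have "\<dots> \<le> card (?Q \<rightarrow>\<^sub>E {0..<n})"
    using img quot_finite[OF F] by (intro card_mono) (auto intro: finite_PiE)
  also have "\<dots> = n ^ CC F" using quot_finite[OF F] by (simp add: card_funcsetE CC_def)
  finally show ?thesis unfolding hom_count_def .
qed

lemma Ln_lower:
  assumes G: "is_graph G" and n: "n \<ge> 1"
  shows "n ^ CC G \<le> hom_count G (Ln n)"
proof -
  let ?R = "(edges G \<union> (edges G)\<inverse>)\<^sup>*"
  let ?Q = "verts G // ?R"
  have symR: "sym ?R" by (rule sym_rtrancl) (auto simp: sym_def)
  define \<Psi> where "\<Psi> g = (\<lambda>v\<in>verts G. g (?R `` {v}))" for g :: "'a set \<Rightarrow> nat"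
  have eqc: "?R `` {u} = ?R `` {v}" if "(u,v) \<in> ?R" for u v
  proof -
    have "(v,u) \<in> ?R" using symR that by (meson symD)
    then show ?thesis using that by (auto intro: rtrancl_trans)
  qed
  have inj: "inj_on \<Psi> (?Q \<rightarrow>\<^sub>E {0..<n})"
  proof (rule inj_onI)
    fix g h assume g: "g \<in> ?Q \<rightarrow>\<^sub>E {0..<n}" and h: "h \<in> ?Q \<rightarrow>\<^sub>E {0..<n}" and e: "\<Psi> g = \<Psi> h"
    show "g = h"
    proof
      fix C show "g C = h C"
      proof (cases "C \<in> ?Q")
        case True
        then obtain v where v: "v \<in> verts G" "C = ?R `` {v}" by (auto simp: quotient_def)
        show ?thesis using fun_cong[OF e, of v] v unfolding \<Psi>_def by simp
      next
        case False then show ?thesis using g h by (auto simp: PiE_def extensional_def)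
      qed
    qed
  qed
  have img: "\<Psi> ` (?Q \<rightarrow>\<^sub>E {0..<n}) \<subseteq> homs G (Ln n)"
  proof
    fix f assume "f \<in> \<Psi> ` (?Q \<rightarrow>\<^sub>E {0..<n})"
    then obtain g where g: "g \<in> ?Q \<rightarrow>\<^sub>E {0..<n}" and f: "f = \<Psi> g" by blast
    have 1: "f \<in> verts G \<rightarrow>\<^sub>E verts (Ln n)" unfolding f \<Psi>_def
    proof (rule restrict_PiE_iff[THEN iffD2], intro ballI)
      fix v assume "v \<in> verts G"
      then have "?R `` {v} \<in> ?Q" by (auto simp: quotient_def)
      then show "g (?R `` {v}) \<in> verts (Ln n)" using g by (auto simp: Ln_def verts_def)
    qed
    have 2: "(f u, f v) \<in> edges (Ln n)" if uv: "(u,v) \<in> edges G" for u v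
    proof -
      have uvV: "u \<in> verts G" "v \<in> verts G" using uv G unfolding is_graph_def by auto
      have "(u,v) \<in> ?R" using uv by auto
      then have "f u = f v" using eqc uvV unfolding f \<Psi>_def by simp
      moreover have "f u \<in> {0..<n}" using 1 uvV unfolding Ln_def verts_def by auto
      ultimately show ?thesis unfolding Ln_def edges_def by auto
    qed
    show "f \<in> homs G (Ln n)" unfolding homs_def using 1 2 by auto
  qed
  have "n ^ CC G = card (?Q \<rightarrow>\<^sub>E {0..<n})" using quot_finite[OF G] by (simp add: card_funcsetE CC_def)
  also have "\<dots> = card (\<Psi> ` (?Q \<rightarrow>\<^sub>E {0..<n}))" using inj by (simp add: card_image)
  also have "\<dots> \<le> card (homs G (Ln n))"
    using img homs_finite[OF G Ln_graph[OF n]] by (intro card_mono)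
  finally show ?thesis unfolding hom_count_def .
qed


definition Hn :: "nat \<Rightarrow> nat graph" where
  "Hn n = ({0..n}, ({0} \<times> {0..n}) \<union> ({0..n} \<times> {0}))"

lemma Hn_graph: "is_graph (Hn n)"
  by (auto simp: is_graph_def Hn_def verts_def edges_def)

definition Ind :: "'a graph \<Rightarrow> 'a set set" where
  "Ind F = {I. I \<subseteq> verts F \<and> edges F \<inter> (I \<times> I) = {}}"

lemma Ind_finite: "is_graph F \<Longrightarrow> finite (Ind F)"
  by (rule finite_subset[of _ "Pow (verts F)"]) (auto simp: Ind_def is_graph_def)

lemma Ind_card: "is_graph F \<Longrightarrow> card (Ind F) \<le> 2 ^ card (verts F)"
proof -
  assume F: "is_graph F"
  have "card (Ind F) \<le> card (Pow (verts F))"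
    using F by (intro card_mono) (auto simp: Ind_def is_graph_def)
  also have "\<dots> = 2 ^ card (verts F)" using F by (simp add: card_Pow is_graph_def)
  finally show ?thesis .
qed

lemma indep_eq: "indep_num F = Max (card ` Ind F)"
  unfolding indep_num_def Ind_def by (rule arg_cong[where f = Max]) auto

lemma Ind_le: "is_graph F \<Longrightarrow> I \<in> Ind F \<Longrightarrow> card I \<le> indep_num F"
  unfolding indep_eq using Ind_finite[of F] by (intro Max_ge) auto

lemma Ind_max: "is_graph F \<Longrightarrow> \<exists>I\<in>Ind F. card I = indep_num F"
proof -
  assume F: "is_graph F"
  have "{} \<in> Ind F" by (simp add: Ind_def)
  then have "indep_num F \<in> card ` Ind F" unfolding indep_eq using Ind_finite[OF F]
    by (intro Max_in) auto
  then show ?thesis by auto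
qed

lemma Hn_lower:
  assumes G: "is_graph G" and n: "n \<ge> 1"
  shows "n ^ indep_num G \<le> hom_count G (Hn n)"
proof -
  obtain I where I: "I \<in> Ind G" and cI: "card I = indep_num G" using Ind_max[OF G] by blast
  have IV: "I \<subseteq> verts G" and IE: "edges G \<inter> (I \<times> I) = {}" using I by (auto simp: Ind_def)
  have fI: "finite I" using IV G finite_subset unfolding is_graph_def by blast
  define \<Psi> where "\<Psi> g = (\<lambda>v\<in>verts G. if v \<in> I then g v else 0)" for g :: "'a \<Rightarrow> nat"
  have inj: "inj_on \<Psi> (I \<rightarrow>\<^sub>E {1..n})"
  proof (rule inj_onI)
    fix g h assume g: "g \<in> I \<rightarrow>\<^sub>E {1..n}" and h: "h \<in> I \<rightarrow>\<^sub>E {1..n}" and e: "\<Psi> g = \<Psi> h"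
    show "g = h"
    proof
      fix v show "g v = h v"
      proof (cases "v \<in> I")
        case True then show ?thesis using fun_cong[OF e, of v] IV unfolding \<Psi>_def by auto
      next
        case False then show ?thesis using g h by (auto simp: PiE_def extensional_def)
      qed
    qed
  qed
  have img: "\<Psi> ` (I \<rightarrow>\<^sub>E {1..n}) \<subseteq> homs G (Hn n)"
  proof
    fix f assume "f \<in> \<Psi> ` (I \<rightarrow>\<^sub>E {1..n})"
    then obtain g where g: "g \<in> I \<rightarrow>\<^sub>E {1..n}" and f: "f = \<Psi> g" by blast
    have 1: "f \<in> verts G \<rightarrow>\<^sub>E verts (Hn n)" unfolding f \<Psi>_def
      using g by (auto simp: Hn_def verts_def PiE_def Pi_def)
    have 2: "(f u, f v) \<in> edges (Hn n)" if uv: "(u,v) \<in> edges G" for u v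
    proof -
      have uvV: "u \<in> verts G" "v \<in> verts G" using uv G unfolding is_graph_def by auto
      have "u \<notin> I \<or> v \<notin> I" using uv IE by auto
      moreover have "f u \<in> {0..n}" "f v \<in> {0..n}" using 1 uvV unfolding Hn_def verts_def by auto
      ultimately show ?thesis using uvV unfolding f \<Psi>_def Hn_def edges_def by auto
    qed
    show "f \<in> homs G (Hn n)" unfolding homs_def using 1 2 by auto
  qed
  have "n ^ indep_num G = card (I \<rightarrow>\<^sub>E {1..n})" using fI cI by (simp add: card_funcsetE)
  also have "\<dots> = card (\<Psi> ` (I \<rightarrow>\<^sub>E {1..n}))" using inj by (simp add: card_image)
  also have "\<dots> \<le> card (homs G (Hn n))"
    using img homs_finite[OF G Hn_graph] by (intro card_mono)
  finally show ?thesis unfolding hom_count_def .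
qed

lemma Hn_upper:
  assumes F: "is_graph F" and n: "n \<ge> 1"
  shows "hom_count F (Hn n) \<le> 2 ^ card (verts F) * n ^ indep_num F"
proof -
  define S where "S f = {v \<in> verts F. f v \<noteq> (0::nat)}" for f :: "'a \<Rightarrow> nat"
  define \<Phi> where "\<Phi> f = (S f, restrict f (S f))" for f
  have inj: "inj_on \<Phi> (homs F (Hn n))"
  proof (rule inj_onI)
    fix f g assume f: "f \<in> homs F (Hn n)" and g: "g \<in> homs F (Hn n)" and e: "\<Phi> f = \<Phi> g"
    then have eS: "S f = S g" and er: "restrict f (S f) = restrict g (S g)" unfolding \<Phi>_def by auto
    show "f = g"
    proof
      fix v show "f v = g v"
      proof (cases "v \<in> verts F")
        case True
        show ?thesis
        proof (cases "v \<in> S f")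
          case True then show ?thesis using fun_cong[OF er, of v] eS by simp
        next
          case False then have "v \<notin> S g" using eS by simp
          then show ?thesis using False \<open>v \<in> verts F\<close> unfolding S_def by auto
        qed
      next
        case False then show ?thesis using f g unfolding homs_def by (auto simp: PiE_def extensional_def)
      qed
    qed
  qed
  have img: "\<Phi> ` homs F (Hn n) \<subseteq> Sigma (Ind F) (\<lambda>I. I \<rightarrow>\<^sub>E {1..n})"
  proof
    fix p assume "p \<in> \<Phi> ` homs F (Hn n)"
    then obtain f where f: "f \<in> homs F (Hn n)" and p: "p = \<Phi> f" by blast
    have fV: "f v \<in> {0..n}" if "v \<in> verts F" for v
      using f that unfolding homs_def Hn_def verts_def by auto
    have "S f \<in> Ind F"
      unfolding Ind_def
    proof (intro CollectI conjI)
      show "S f \<subseteq> verts F" by (auto simp: S_def)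
      show "edges F \<inter> (S f \<times> S f) = {}"
      proof (rule ccontr)
        assume "edges F \<inter> (S f \<times> S f) \<noteq> {}"
        then obtain u v where "(u,v) \<in> edges F" "f u \<noteq> 0" "f v \<noteq> 0" by (auto simp: S_def)
        moreover have "(f u, f v) \<in> edges (Hn n)" using f \<open>(u,v) \<in> edges F\<close> unfolding homs_def by auto
        ultimately show False unfolding Hn_def edges_def by auto
      qed
    qed
    moreover have "restrict f (S f) \<in> S f \<rightarrow>\<^sub>E {1..n}"
      using fV by (auto simp: S_def)
    ultimately show "p \<in> Sigma (Ind F) (\<lambda>I. I \<rightarrow>\<^sub>E {1..n})" unfolding p \<Phi>_def by auto
  qed
  have finI: "\<And>I. I \<in> Ind F \<Longrightarrow> finite I"
    using F unfolding Ind_def is_graph_def by (auto intro: finite_subset)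
  have "card (homs F (Hn n)) = card (\<Phi> ` homs F (Hn n))" using inj by (simp add: card_image)
  also have "\<dots> \<le> card (Sigma (Ind F) (\<lambda>I. I \<rightarrow>\<^sub>E {1..n}))"
    using img Ind_finite[OF F] finI by (intro card_mono) (auto intro!: finite_SigmaI finite_PiE)
  also have "\<dots> = (\<Sum>I\<in>Ind F. card (I \<rightarrow>\<^sub>E {1..n}))"
    using Ind_finite[OF F] finI by (intro card_SigmaI) (auto intro: finite_PiE)
  also have "\<dots> = (\<Sum>I\<in>Ind F. n ^ card I)"
    using finI by (intro sum.cong) (auto simp: card_funcsetE)
  also have "\<dots> \<le> (\<Sum>I\<in>Ind F. n ^ indep_num F)"
    using Ind_le[OF F] n by (intro sum_mono power_increasing) auto
  also have "\<dots> = card (Ind F) * n ^ indep_num F" by simp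
  also have "\<dots> \<le> 2 ^ card (verts F) * n ^ indep_num F"
    using Ind_card[OF F] by simp
  finally show ?thesis unfolding hom_count_def .
qed


theorem mainTheorem6:
  fixes F :: "'a graph" and G :: "'b graph"
  assumes "is_graph F" and "is_graph G" and "hom_exists F G"
  shows "HDE F G \<le> real (card (verts F)) / real (card (verts G)) \<and>
         HDE F G \<le> real (CC F) / real (CC G) \<and>
         (indep_num G \<ge> 1 \<longrightarrow> HDE F G \<le> real (indep_num F) / real (indep_num G))"
proof (intro conjI impI)
  note F = assms(1) and G = assms(2) and ex = assms(3)
  show "HDE F G \<le> real (card (verts F)) / real (card (verts G))"
  proof (rule HDE_le[OF F G ex])
    fix c assume hc: "\<forall>T::nat graph. is_graph T \<longrightarrow> real (hom_count G T) powr c \<le> real (hom_count F T)"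
    show "c \<le> real (card (verts F)) / real (card (verts G))"
    proof (rule family_bound[OF hc, of Kn 1])
      show "is_graph (Kn n)" if "n \<ge> 1" for n using Kn_graph that .
      show "real (hom_count F (Kn n)) \<le> 1 * real n ^ card (verts F)" for n
        by (simp add: Kn_count[OF F])
      show "real n ^ card (verts G) \<le> real (hom_count G (Kn n))" for n
        by (simp add: Kn_count[OF G])
      show "card (verts G) > 0" using G by (simp add: is_graph_def card_gt_0_iff)
    qed
  qed
  show "HDE F G \<le> real (CC F) / real (CC G)"
  proof (rule HDE_le[OF F G ex])
    fix c assume hc: "\<forall>T::nat graph. is_graph T \<longrightarrow> real (hom_count G T) powr c \<le> real (hom_count F T)"
    show "c \<le> real (CC F) / real (CC G)"
    proof (rule family_bound[OF hc, of Ln 1])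
      show "is_graph (Ln n)" if "n \<ge> 1" for n using Ln_graph that .
      show "real (hom_count F (Ln n)) \<le> 1 * real n ^ CC F" for n
        using Ln_upper[OF F, of n] by (simp flip: of_nat_power)
      show "real n ^ CC G \<le> real (hom_count G (Ln n))" if "n \<ge> 1" for n
        using Ln_lower[OF G that] by (simp flip: of_nat_power)
      have "verts G // (edges G \<union> (edges G)\<inverse>)\<^sup>* \<noteq> {}"
        using G by (auto simp: is_graph_def quotient_def)
      then show "CC G > 0" unfolding CC_def using quot_finite[OF G] by (simp add: card_gt_0_iff)
    qed
  qed
  assume a1: "indep_num G \<ge> 1"
  show "HDE F G \<le> real (indep_num F) / real (indep_num G)"
  proof (rule HDE_le[OF F G ex])
    fix c assume hc: "\<forall>T::nat graph. is_graph T \<longrightarrow> real (hom_count G T) powr c \<le> real (hom_count F T)"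
    show "c \<le> real (indep_num F) / real (indep_num G)"
    proof (rule family_bound[OF hc, of Hn "2 ^ card (verts F)"])
      show "is_graph (Hn n)" for n using Hn_graph .
      show "real (hom_count F (Hn n)) \<le> 2 ^ card (verts F) * real n ^ indep_num F" if "n \<ge> 1" for n
      proof -
        have "real (hom_count F (Hn n)) \<le> real (2 ^ card (verts F) * n ^ indep_num F)"
          using Hn_upper[OF F that] by (simp only: of_nat_le_iff)
        then show ?thesis by simp
      qed
      show "real n ^ indep_num G \<le> real (hom_count G (Hn n))" if "n \<ge> 1" for n
        using Hn_lower[OF G that] by (simp flip: of_nat_power)
      show "indep_num G > 0" using a1 by simp
    qed
  qed
qed

end
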